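(* Assume $\Pi$ is realizable ($\pi^\star\in\Pi$). Fix any layer $h\in[H]$. For any suffix policy $\hat\pi_{h+1:H}\in\Pi_{h+1:H}$, $$\varepsilon_{\mathrm{PC}}(\hat\pi_{h+1:H})\le C_{\mathrm{push}}\cdot\mathbb{E}_{x'\sim\mu_{h+1}}\big[V^\star(x')-V^{\hat\pi}(x')\big],$$ with the convention that for $h=H$ the right-hand side is $0$.
   Context: Layered finite-horizon MDP with layers $\mathcal{X}_1,\dots,\mathcal{X}_H$, actions $\mathcal{A}$, rewards with $\sum_h r_h\in[0,1]$ a.s.; $\pi^\star$ an optimal deterministic policy, $V^\star=V^{\pi^\star}$. $\Pi$ is a class of deterministic policies, $\Pi_h$ its restrictions to $\mathcal{X}_h$, $\Pi_{h+1:H}$ its restrictions to layers $h+1,\dots,H$. For $x\in\mathcal{X}_h$, $Q^{\hat\pi}(x,a)$ is the expected return from playing $a$ at $x$ and then following $\hat\pi_{h+1:H}$, $Q^{\hat\pi}(x,\pi_h):=Q^{\hat\pi}(x,\pi_h(x))$, and for $x'\in\mathcal{X}_{h+1}$, $V^{\hat\pi}(x')$ is the return of following $\hat\pi_{h+1:H}$ from $x'$. Reset distribution $\mu=\{\mu_h\}$, $\mu_h\in\Delta(\mathcal{X}_h)$, with pushforward concentrability $C_{\mathrm{push}}=\max_{2\le h\le H}\sup_{x\in\mathcal{X}_{h-1},a,x'\in\mathcal{X}_h}P(x'\mid x,a)/\mu_h(x')$. Average policy-completeness error: $\varepsilon_{\mathrm{PC}}(\hat\pi_{h+1:H}):=\min_{\pi_h\in\Pi_h}\mathbb{E}_{x\sim\mu_h}[\max_{a\in\mathcal{A}}Q^{\hat\pi}(x,a)-Q^{\hat\pi}(x,\pi_h)]$.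 *)

theory Defs
  imports "HOL-Probability.Probability"
begin

text \<open>P x a is the next-state distribution, r x a the (expected) reward.\<close>

definition layered_mdp ::
  "nat \<Rightarrow> (nat \<Rightarrow> 'x set) \<Rightarrow> ('x \<Rightarrow> 'a \<Rightarrow> 'x pmf) \<Rightarrow> bool" where
  "layered_mdp H X P \<longleftrightarrow> 1 \<le> H
     \<and> (\<forall>h\<in>{1..H}. \<forall>h'\<in>{1..H}. h \<noteq> h' \<longrightarrow> X h \<inter> X h' = {})
     \<and> (\<forall>h\<in>{1..<H}. \<forall>x\<in>X h. \<forall>a. set_pmf (P x a) \<subseteq> X (Suc h))"

definition rewards_bounded ::
  "nat \<Rightarrow> (nat \<Rightarrow> 'x set) \<Rightarrow> ('x \<Rightarrow> 'a \<Rightarrow> 'x pmf) \<Rightarrow> ('x \<Rightarrow> 'a \<Rightarrow> real) \<Rightarrow> bool" where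
  "rewards_bounded H X P r \<longleftrightarrow>
     (\<forall>h\<in>{1..H}. \<forall>(xs :: nat \<Rightarrow> 'x) (as :: nat \<Rightarrow> 'a).
        xs h \<in> X h \<and> (\<forall>i\<in>{h..<H}. xs (Suc i) \<in> set_pmf (P (xs i) (as i)))
        \<longrightarrow> 0 \<le> (\<Sum>i=h..H. r (xs i) (as i)) \<and> (\<Sum>i=h..H. r (xs i) (as i)) \<le> 1)"

fun Vsteps ::
  "('x \<Rightarrow> 'a \<Rightarrow> 'x pmf) \<Rightarrow> ('x \<Rightarrow> 'a \<Rightarrow> real) \<Rightarrow> ('x \<Rightarrow> 'a) \<Rightarrow> nat \<Rightarrow> 'x \<Rightarrow> real" where
  "Vsteps P r p 0 x = 0"
| "Vsteps P r p (Suc n) x =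
     r x (p x) + measure_pmf.expectation (P x (p x)) (Vsteps P r p n)"

text \<open>V^p(x) for x in layer h: follow p on layers h..H.\<close>
definition Vfun ::
  "nat \<Rightarrow> ('x \<Rightarrow> 'a \<Rightarrow> 'x pmf) \<Rightarrow> ('x \<Rightarrow> 'a \<Rightarrow> real) \<Rightarrow> ('x \<Rightarrow> 'a) \<Rightarrow> nat \<Rightarrow> 'x \<Rightarrow> real" where
  "Vfun H P r p h x = Vsteps P r p (Suc H - h) x"

text \<open>Q^p(x,a) for x in layer h: play a, then follow p on layers h+1..H.\<close>
definition Qfun ::
  "nat \<Rightarrow> ('x \<Rightarrow> 'a \<Rightarrow> 'x pmf) \<Rightarrow> ('x \<Rightarrow> 'a \<Rightarrow> real) \<Rightarrow> ('x \<Rightarrow> 'a) \<Rightarrow> nat \<Rightarrow> 'x \<Rightarrow> 'a \<Rightarrow> real" where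
  "Qfun H P r p h x a = r x a + measure_pmf.expectation (P x a) (Vsteps P r p (H - h))"

definition optimal_policy ::
  "nat \<Rightarrow> (nat \<Rightarrow> 'x set) \<Rightarrow> ('x \<Rightarrow> 'a \<Rightarrow> 'x pmf) \<Rightarrow> ('x \<Rightarrow> 'a \<Rightarrow> real) \<Rightarrow> ('x \<Rightarrow> 'a) \<Rightarrow> bool" where
  "optimal_policy H X P r pistar \<longleftrightarrow>
     (\<forall>h\<in>{1..H}. \<forall>x\<in>X h. \<forall>p. Vfun H P r p h x \<le> Vfun H P r pistar h x)"

text \<open>Pushforward concentrability: the sup over ratios P(x'|x,a)/mu_h(x'),
  written as the least C \<ge> 0 with P(x'|x,a) \<le> C mu_h(x') (this handles mu_h(x') = 0 correctly).\<close>
definition push_ok ::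
  "nat \<Rightarrow> (nat \<Rightarrow> 'x set) \<Rightarrow> ('x \<Rightarrow> 'a \<Rightarrow> 'x pmf) \<Rightarrow> (nat \<Rightarrow> 'x pmf) \<Rightarrow> real \<Rightarrow> bool" where
  "push_ok H X P mu C \<longleftrightarrow> 0 \<le> C \<and>
     (\<forall>h\<in>{2..H}. \<forall>x\<in>X (h - 1). \<forall>a. \<forall>x'\<in>X h. pmf (P x a) x' \<le> C * pmf (mu h) x')"

definition C_push ::
  "nat \<Rightarrow> (nat \<Rightarrow> 'x set) \<Rightarrow> ('x \<Rightarrow> 'a \<Rightarrow> 'x pmf) \<Rightarrow> (nat \<Rightarrow> 'x pmf) \<Rightarrow> real" where
  "C_push H X P mu = Inf {C. push_ok H X P mu C}"

text \<open>Average policy-completeness error of the suffix of pihat (layers h+1..H) at layer h;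
  the minimum over Pi_h is an infimum over the restrictions to X h of the policies in Pol
  (the expectation only sees X h since mu_h is supported there).\<close>
definition eps_PC ::
  "nat \<Rightarrow> ('x \<Rightarrow> 'a \<Rightarrow> 'x pmf) \<Rightarrow> ('x \<Rightarrow> 'a \<Rightarrow> real) \<Rightarrow> (nat \<Rightarrow> 'x pmf) \<Rightarrow> ('x \<Rightarrow> 'a) set
     \<Rightarrow> nat \<Rightarrow> ('x \<Rightarrow> 'a) \<Rightarrow> real" where
  "eps_PC H P r mu Pol h pihat =
     (INF p\<in>Pol. measure_pmf.expectation (mu h)
        (\<lambda>x. (SUP a. Qfun H P r pihat h x a) - Qfun H P r pihat h x (p x)))"

end

theory Submission
  imports Defs
begin

lemma pmf_int:
  fixes f :: "'b \<Rightarrow> real"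
  shows "(\<forall>y\<in>set_pmf p. \<bar>f y\<bar> \<le> B) \<Longrightarrow> integrable (measure_pmf p) f"
  by (intro measure_pmf.integrable_const_bound[where B=B] AE_pmfI) auto

lemma pmf_exp_bounds:
  fixes f :: "'b \<Rightarrow> real"
  assumes "\<forall>y\<in>set_pmf p. a \<le> f y \<and> f y \<le> b"
  shows "a \<le> measure_pmf.expectation p f \<and> measure_pmf.expectation p f \<le> b"
proof -
  have i: "integrable (measure_pmf p) f"
    by (rule pmf_int[where B="\<bar>a\<bar> + \<bar>b\<bar>"]) (use assms in fastforce)
  have "measure_pmf.expectation p (\<lambda>_. a) \<le> measure_pmf.expectation p f"
    by (intro integral_mono_AE i AE_pmfI) (use assms in auto)
  moreover have "measure_pmf.expectation p f \<le> measure_pmf.expectation p (\<lambda>_. b)"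
    by (intro integral_mono_AE i AE_pmfI) (use assms in auto)
  ultimately show ?thesis by simp
qed

lemma Vinv:
  assumes rew: "rewards_bounded H X P r" and h: "h \<in> {1..H}"
  shows "n = Suc H - k \<Longrightarrow> h \<le> k \<Longrightarrow> k \<le> Suc H \<Longrightarrow> xs h \<in> X h \<Longrightarrow>
    (\<forall>i\<in>{h..<k}. xs (Suc i) \<in> set_pmf (P (xs i) (as i))) \<Longrightarrow>
    0 \<le> (\<Sum>i=h..<k. r (xs i) (as i)) + Vsteps P r p n (xs k) \<and>
    (\<Sum>i=h..<k. r (xs i) (as i)) + Vsteps P r p n (xs k) \<le> 1"
proof (induction n arbitrary: k xs as)
  case 0
  then have k: "k = Suc H" by simp
  have "(\<Sum>i=h..<k. r (xs i) (as i)) = (\<Sum>i=h..H. r (xs i) (as i))"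
    using k by (simp add: atLeastLessThanSuc_atLeastAtMost)
  moreover have "0 \<le> (\<Sum>i=h..H. r (xs i) (as i)) \<and> (\<Sum>i=h..H. r (xs i) (as i)) \<le> 1"
    using rew h 0 k unfolding rewards_bounded_def by auto
  ultimately show ?case by simp
next
  case (Suc n)
  have kH: "k \<le> H" and n: "n = Suc H - Suc k" using Suc.prems by auto
  define S where "S = (\<Sum>i=h..<k. r (xs i) (as i))"
  define a where "a = p (xs k)"
  have each: "\<forall>y\<in>set_pmf (P (xs k) a). - S - r (xs k) a \<le> Vsteps P r p n y \<and> Vsteps P r p n y \<le> 1 - S - r (xs k) a"
  proof
    fix y assume y: "y \<in> set_pmf (P (xs k) a)"
    define xs' where "xs' = xs(Suc k := y)"
    define as' where "as' = as(k := a)"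
    have "(\<Sum>i=h..<Suc k. r (xs' i) (as' i)) = (\<Sum>i=h..<k. r (xs' i) (as' i)) + r (xs' k) (as' k)"
      using Suc.prems by (simp add: sum.atLeastLessThan_Suc)
    also have "(\<Sum>i=h..<k. r (xs' i) (as' i)) = S"
      unfolding S_def xs'_def as'_def by (intro sum.cong) auto
    finally have sum': "(\<Sum>i=h..<Suc k. r (xs' i) (as' i)) = S + r (xs k) a"
      by (simp add: xs'_def as'_def)
    have tr: "\<forall>i\<in>{h..<Suc k}. xs' (Suc i) \<in> set_pmf (P (xs' i) (as' i))"
      using Suc.prems y by (auto simp: xs'_def as'_def less_Suc_eq)
    have "xs' h \<in> X h" using Suc.prems by (simp add: xs'_def)
    from Suc.IH[OF n _ _ this tr] Suc.prems kH sum'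
    show "- S - r (xs k) a \<le> Vsteps P r p n y \<and> Vsteps P r p n y \<le> 1 - S - r (xs k) a"
      by (simp add: xs'_def)
  qed
  from pmf_exp_bounds[OF each]
  show ?case by (simp add: S_def[symmetric] a_def[symmetric])
qed

lemma Vbound:
  assumes rew: "rewards_bounded H X P r" and k: "k \<in> {1..H}" and x: "x \<in> X k"
  shows "0 \<le> Vsteps P r p (Suc H - k) x \<and> Vsteps P r p (Suc H - k) x \<le> 1"
  using Vinv[OF rew k, of _ k "\<lambda>_. x"] k x by auto


lemma pmf_integral_cong:
  fixes f g :: "'b \<Rightarrow> real"
  shows "(\<And>y. y \<in> set_pmf p \<Longrightarrow> f y = g y) \<Longrightarrow> measure_pmf.expectation p f = measure_pmf.expectation p g"
  by (intro integral_cong_AE AE_pmfI) auto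

lemma Vupd:
  assumes mdp: "layered_mdp H X P" and h: "h \<in> {1..H}" and x0: "x0 \<in> X h"
  shows "n = Suc H - k \<Longrightarrow> h < k \<Longrightarrow> k \<le> H \<Longrightarrow> y \<in> X k \<Longrightarrow>
    Vsteps P r (p(x0:=a)) n y = Vsteps P r p n y"
proof (induction n arbitrary: k y)
  case 0 then show ?case by simp
next
  case (Suc n)
  have "X h \<inter> X k = {}" using mdp h Suc.prems unfolding layered_mdp_def by auto
  then have "y \<noteq> x0" using x0 Suc.prems by auto
  then have py: "(p(x0:=a)) y = p y" by simp
  show ?case
  proof (cases "k = H")
    case True
    then have "n = 0" using Suc.prems by simp
    then show ?thesis using py by (simp, intro pmf_integral_cong) simp
  next
    case False
    have supp: "set_pmf (P y (p y)) \<subseteq> X (Suc k)"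
      using mdp Suc.prems False unfolding layered_mdp_def by auto
    have "measure_pmf.expectation (P y (p y)) (Vsteps P r (p(x0:=a)) n)
        = measure_pmf.expectation (P y (p y)) (Vsteps P r p n)"
      by (rule pmf_integral_cong, rule Suc.IH[of "Suc k"]) (use Suc.prems False supp in auto)
    then show ?thesis using py by (simp only: Vsteps.simps)
  qed
qed

lemma QV:
  assumes mdp: "layered_mdp H X P" and h: "h \<in> {1..H}" and x: "x \<in> X h"
  shows "Qfun H P r p h x a = Vfun H P r (p(x:=a)) h x"
proof -
  have e: "Suc H - h = Suc (H - h)" using h by auto
  have "measure_pmf.expectation (P x a) (Vsteps P r p (H - h))
      = measure_pmf.expectation (P x a) (Vsteps P r (p(x:=a)) (H - h))"
  proof (cases "h = H")
    case True then show ?thesis by (intro pmf_integral_cong) simp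
  next
    case False
    have supp: "set_pmf (P x a) \<subseteq> X (Suc h)"
      using mdp h x False unfolding layered_mdp_def by auto
    show ?thesis
      by (rule pmf_integral_cong, rule Vupd[OF mdp h x, of _ "Suc h", symmetric])
         (use supp h False in auto)
  qed
  then show ?thesis unfolding Qfun_def Vfun_def e by simp
qed

lemma Qbound:
  assumes mdp: "layered_mdp H X P" and rew: "rewards_bounded H X P r"
    and h: "h \<in> {1..H}" and x: "x \<in> X h"
  shows "0 \<le> Qfun H P r p h x a \<and> Qfun H P r p h x a \<le> 1"
  using Vbound[OF rew h x, of "p(x:=a)"] QV[OF mdp h x] unfolding Vfun_def by simp


lemma dens:
  fixes f :: "'b \<Rightarrow> real"
  assumes C: "0 \<le> C" and pA: "set_pmf p \<subseteq> A" and qA: "set_pmf q \<subseteq> A"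
    and dom: "\<forall>y\<in>A. pmf p y \<le> C * pmf q y" and f: "\<forall>y\<in>A. 0 \<le> f y \<and> f y \<le> B"
  shows "measure_pmf.expectation p f \<le> C * measure_pmf.expectation q f"
proof -
  define g where "g y = (if y \<in> A then f y else 0)" for y
  have g0: "0 \<le> g y" for y using f by (auto simp: g_def)
  have gB: "\<bar>g y\<bar> \<le> \<bar>B\<bar>" for y using f by (auto simp: g_def)
  have ep: "measure_pmf.expectation p f = measure_pmf.expectation p g"
    by (rule pmf_integral_cong) (use pA in \<open>auto simp: g_def\<close>)
  have eq: "measure_pmf.expectation q f = measure_pmf.expectation q g"
    by (rule pmf_integral_cong) (use qA in \<open>auto simp: g_def\<close>)
  have ip: "integrable (measure_pmf p) g" by (rule pmf_int[where B="\<bar>B\<bar>"]) (use gB in auto)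
  have iq: "integrable (measure_pmf q) g" by (rule pmf_int[where B="\<bar>B\<bar>"]) (use gB in auto)
  have "ennreal (measure_pmf.expectation p g) = (\<integral>\<^sup>+ y. ennreal (g y) \<partial>measure_pmf p)"
    by (rule nn_integral_eq_integral[symmetric]) (use ip g0 in auto)
  also have "\<dots> = (\<integral>\<^sup>+ y. ennreal (pmf p y) * ennreal (g y) \<partial>count_space UNIV)"
    by (rule nn_integral_measure_pmf)
  also have "\<dots> \<le> (\<integral>\<^sup>+ y. ennreal C * (ennreal (pmf q y) * ennreal (g y)) \<partial>count_space UNIV)"
  proof (rule nn_integral_mono)
    fix y
    show "ennreal (pmf p y) * ennreal (g y) \<le> ennreal C * (ennreal (pmf q y) * ennreal (g y))"
    proof (cases "y \<in> A")
      case True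
      then have "pmf p y * g y \<le> C * pmf q y * g y"
        using dom g0 by (intro mult_right_mono) auto
      then show ?thesis using C g0
        by (simp add: ennreal_mult'[symmetric] ennreal_mult[symmetric] mult.assoc ennreal_leI)
    next
      case False then show ?thesis by (simp add: g_def)
    qed
  qed
  also have "\<dots> = ennreal C * (\<integral>\<^sup>+ y. ennreal (pmf q y) * ennreal (g y) \<partial>count_space UNIV)"
    by (rule nn_integral_cmult) simp
  also have "(\<integral>\<^sup>+ y. ennreal (pmf q y) * ennreal (g y) \<partial>count_space UNIV) = (\<integral>\<^sup>+ y. ennreal (g y) \<partial>measure_pmf q)"
    by (rule nn_integral_measure_pmf[symmetric])
  also have "\<dots> = ennreal (measure_pmf.expectation q g)"
    by (rule nn_integral_eq_integral) (use iq g0 in auto)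
  finally have "ennreal (measure_pmf.expectation p g) \<le> ennreal (C * measure_pmf.expectation q g)"
    using C g0 by (simp add: ennreal_mult integral_nonneg_AE)
  moreover have "0 \<le> C * measure_pmf.expectation q g"
    using C g0 by (simp add: integral_nonneg_AE)
  ultimately show ?thesis using ep eq by (simp add: ennreal_le_iff)
qed


lemma push_Inf:
  assumes "\<exists>C. push_ok H X P mu C"
  shows "push_ok H X P mu (C_push H X P mu)"
proof -
  let ?S = "{C. push_ok H X P mu C}"
  have ne: "?S \<noteq> {}" using assms by auto
  have bdd: "bdd_below ?S" by (rule bdd_belowI[where m=0]) (auto simp: push_ok_def)
  have "0 \<le> Inf ?S" by (rule cInf_greatest[OF ne]) (auto simp: push_ok_def)
  moreover have "pmf (P x a) x' \<le> Inf ?S * pmf (mu h) x'"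
    if h: "h \<in> {2..H}" and x: "x \<in> X (h - 1)" and x': "x' \<in> X h" for h x a x'
  proof (cases "pmf (mu h) x' = 0")
    case True
    obtain C where "push_ok H X P mu C" using assms by auto
    then show ?thesis using True h x x' unfolding push_ok_def by fastforce
  next
    case False
    then have pos: "0 < pmf (mu h) x'" by (simp add: order_less_le)
    have "pmf (P x a) x' / pmf (mu h) x' \<le> Inf ?S"
    proof (rule cInf_greatest[OF ne])
      fix C assume "C \<in> ?S"
      then have "pmf (P x a) x' \<le> C * pmf (mu h) x'" using h x x' unfolding push_ok_def by auto
      then show "pmf (P x a) x' / pmf (mu h) x' \<le> C" using pos by (simp add: divide_le_eq)
    qed
    then show ?thesis using pos by (simp add: divide_le_eq)
  qed
  ultimately show ?thesis unfolding push_ok_def C_push_def by auto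
qed

lemma Vsteps0: "Vsteps P r p 0 = (\<lambda>_. 0)" by auto

theorem lemma1:
  fixes H :: nat and X :: "nat \<Rightarrow> 'x set" and P :: "'x \<Rightarrow> 'a \<Rightarrow> 'x pmf"
    and r :: "'x \<Rightarrow> 'a \<Rightarrow> real" and mu :: "nat \<Rightarrow> 'x pmf"
    and Pol :: "('x \<Rightarrow> 'a) set" and pistar pihat :: "'x \<Rightarrow> 'a" and h :: nat
  assumes mdp: "layered_mdp H X P"
    and rew: "rewards_bounded H X P r"
    and reset: "\<forall>k\<in>{1..H}. set_pmf (mu k) \<subseteq> X k"
    and conc: "\<exists>C. push_ok H X P mu C"
    and opt: "optimal_policy H X P r pistar"
    and realizable: "pistar \<in> Pol"
    and hH: "h \<in> {1..H}"
    and pihat: "pihat \<in> Pol"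
  shows "eps_PC H P r mu Pol h pihat \<le>
    (if h = H then 0
     else C_push H X P mu *
       measure_pmf.expectation (mu (Suc h))
         (\<lambda>x'. Vfun H P r pistar (Suc h) x' - Vfun H P r pihat (Suc h) x'))"
proof -
  let ?Qh = "Qfun H P r pihat h" and ?Qs = "Qfun H P r pistar h"
  have Qle: "?Qh x a \<le> ?Qs x a" if x: "x \<in> X h" for x a
  proof (cases "h = H")
    case True then show ?thesis by (simp add: Qfun_def Vsteps0)
  next
    case False
    have supp: "set_pmf (P x a) \<subseteq> X (Suc h)"
      using mdp hH x False unfolding layered_mdp_def by auto
    have h1: "Suc h \<in> {1..H}" using hH False by auto
    have e: "Suc H - Suc h = H - h" by simp
    have bd: "0 \<le> Vsteps P r p (H - h) y \<and> Vsteps P r p (H - h) y \<le> 1" if "y \<in> set_pmf (P x a)" for y p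
      using Vbound[OF rew h1, of y p] that supp e by auto
    have "measure_pmf.expectation (P x a) (Vsteps P r pihat (H - h))
        \<le> measure_pmf.expectation (P x a) (Vsteps P r pistar (H - h))"
    proof (rule integral_mono_AE)
      show "integrable (measure_pmf (P x a)) (Vsteps P r pihat (H - h))"
        by (rule pmf_int[where B=1]) (use bd in auto)
      show "integrable (measure_pmf (P x a)) (Vsteps P r pistar (H - h))"
        by (rule pmf_int[where B=1]) (use bd in auto)
      show "AE y in measure_pmf (P x a). Vsteps P r pihat (H - h) y \<le> Vsteps P r pistar (H - h) y"
      proof (rule AE_pmfI)
        fix y assume "y \<in> set_pmf (P x a)"
        then have "y \<in> X (Suc h)" using supp by auto
        then have "Vfun H P r pihat (Suc h) y \<le> Vfun H P r pistar (Suc h) y"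
          using opt h1 unfolding optimal_policy_def by blast
        then show "Vsteps P r pihat (H - h) y \<le> Vsteps P r pistar (H - h) y"
          unfolding Vfun_def e .
      qed
    qed
    then show ?thesis unfolding Qfun_def by simp
  qed
  have Qs_le: "?Qs x a \<le> ?Qs x (pistar x)" if x: "x \<in> X h" for x a
    using QV[OF mdp hH x, of r pistar a] QV[OF mdp hH x, of r pistar "pistar x"] opt hH x
    unfolding optimal_policy_def by auto
  have bdd: "bdd_above (range (?Qh x))" if x: "x \<in> X h" for x
    by (rule bdd_aboveI2[where M="?Qs x (pistar x)"]) (rule order_trans[OF Qle[OF x] Qs_le[OF x]])
  have suple: "(SUP a. ?Qh x a) \<le> ?Qs x (pistar x)" if x: "x \<in> X h" for x
    by (rule cSUP_least) (auto intro: order_trans[OF Qle[OF x] Qs_le[OF x]])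
  have supge: "?Qh x b \<le> (SUP a. ?Qh x a)" if x: "x \<in> X h" for x b
    by (rule cSUP_upper[OF _ bdd[OF x]]) simp
  define g where "g p x = (SUP a. ?Qh x a) - ?Qh x (p x)" for p x
  have muh: "set_pmf (mu h) \<subseteq> X h" using reset hH by auto
  have g0: "0 \<le> g p x" if "x \<in> X h" for p x using supge[OF that] by (simp add: g_def)
  have "eps_PC H P r mu Pol h pihat \<le> measure_pmf.expectation (mu h) (g pistar)"
    unfolding eps_PC_def g_def[symmetric]
  proof (rule cINF_lower[OF _ realizable])
    show "bdd_below ((\<lambda>p. measure_pmf.expectation (mu h) (g p)) ` Pol)"
      by (rule bdd_belowI2[where m=0], rule integral_nonneg_AE, rule AE_pmfI)
         (use g0 muh in auto)
  qed
  also have "\<dots> \<le> (if h = H then 0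
     else C_push H X P mu *
       measure_pmf.expectation (mu (Suc h))
         (\<lambda>x'. Vfun H P r pistar (Suc h) x' - Vfun H P r pihat (Suc h) x'))"
  proof (cases "h = H")
    case True
    have gle: "g pistar x \<le> 0" if "x \<in> X h" for x
      using suple[OF that] True by (simp add: g_def Qfun_def Vsteps0)
    then have "- 1 \<le> measure_pmf.expectation (mu h) (g pistar) \<and> measure_pmf.expectation (mu h) (g pistar) \<le> 0"
      by (intro pmf_exp_bounds) (metis (no_types, lifting) g0 gle muh subsetD order_trans neg_le_0_iff_le zero_le_one)
    then show ?thesis using True by simp
  next
    case False
    define f where "f x' = Vfun H P r pistar (Suc h) x' - Vfun H P r pihat (Suc h) x'" for x'
    define E where "E = measure_pmf.expectation (mu (Suc h)) f"
    define C where "C = C_push H X P mu"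
    have h1: "Suc h \<in> {1..H}" using hH False by auto
    have e: "Suc H - Suc h = H - h" by simp
    have pok: "push_ok H X P mu C" unfolding C_def by (rule push_Inf[OF conc])
    have fb: "0 \<le> f y \<and> f y \<le> 1" if "y \<in> X (Suc h)" for y
      using Vbound[OF rew h1 that, of pistar] Vbound[OF rew h1 that, of pihat] opt h1 that
      unfolding f_def optimal_policy_def Vfun_def by fastforce
    have gle: "g pistar x \<le> C * E" if x: "x \<in> X h" for x
    proof -
      let ?a = "pistar x"
      have supp: "set_pmf (P x ?a) \<subseteq> X (Suc h)"
        using mdp hH x False unfolding layered_mdp_def by auto
      have bd: "0 \<le> Vsteps P r p (H - h) y \<and> Vsteps P r p (H - h) y \<le> 1" if "y \<in> set_pmf (P x ?a)" for y p
        using Vbound[OF rew h1, of y p] that supp e by auto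
      have "?Qs x ?a - ?Qh x ?a = measure_pmf.expectation (P x ?a) (Vsteps P r pistar (H - h))
          - measure_pmf.expectation (P x ?a) (Vsteps P r pihat (H - h))"
        unfolding Qfun_def by simp
      also have "\<dots> = measure_pmf.expectation (P x ?a) (\<lambda>y. Vsteps P r pistar (H - h) y - Vsteps P r pihat (H - h) y)"
      proof -
        have "integrable (measure_pmf (P x ?a)) (Vsteps P r pistar (H - h))"
          by (rule pmf_int[where B=1]) (use bd in auto)
        moreover have "integrable (measure_pmf (P x ?a)) (Vsteps P r pihat (H - h))"
          by (rule pmf_int[where B=1]) (use bd in auto)
        ultimately show ?thesis by (simp add: Bochner_Integration.integral_diff)
      qed
      also have "\<dots> = measure_pmf.expectation (P x ?a) f"
        unfolding f_def Vfun_def e ..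
      also have "\<dots> \<le> C * E"
        unfolding E_def
      proof (rule dens[where A="X (Suc h)" and B=1])
        show "0 \<le> C" using pok unfolding push_ok_def by auto
        show "set_pmf (P x ?a) \<subseteq> X (Suc h)" by (rule supp)
        show "set_pmf (mu (Suc h)) \<subseteq> X (Suc h)" using reset h1 by auto
        show "\<forall>y\<in>X (Suc h). pmf (P x ?a) y \<le> C * pmf (mu (Suc h)) y"
        proof
          fix y assume y: "y \<in> X (Suc h)"
          have "Suc h \<in> {2..H}" using h1 hH by auto
          moreover have "x \<in> X (Suc h - 1)" using x by simp
          ultimately show "pmf (P x ?a) y \<le> C * pmf (mu (Suc h)) y"
            using pok y unfolding push_ok_def by blast
        qed
        show "\<forall>y\<in>X (Suc h). 0 \<le> f y \<and> f y \<le> 1" using fb by auto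
      qed
      finally have "?Qs x ?a - ?Qh x ?a \<le> C * E" .
      then show ?thesis using suple[OF x] by (simp add: g_def)
    qed
    then have "- 1 \<le> measure_pmf.expectation (mu h) (g pistar) \<and> measure_pmf.expectation (mu h) (g pistar) \<le> C * E"
      by (intro pmf_exp_bounds) (metis (no_types, lifting) g0 gle muh subsetD order_trans neg_le_0_iff_le zero_le_one)
    then show ?thesis using False unfolding C_def E_def f_def by simp
  qed
  finally show ?thesis .
qed

end
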